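(* Let $k$ and $n$ be sufficiently large and let $\Phi$ be a $k$-CNF on $x_1,\dots,x_n$ with $m$ clauses that is quasirandom. Then $\mathrm{suc}\big(\Phi,\lceil\exp(n/k^2)\rceil\big)\leq \exp(-n/k^2)$.
   Context: Let $\Phi=\Phi_1\wedge\dots\wedge\Phi_m$ be a $k$-CNF on $x_1,\dots,x_n$, with clauses $\Phi_i=\Phi_{i1}\vee\dots\vee\Phi_{ik}$; for a literal $l$, $|l|$ is its underlying variable. Set $\rho=2^{-k}m/n$ and $\kappa=\ln k/k$. For $\sigma\in\{0,1\}^n$, $U_\Phi(\sigma)$ is the set of indices of clauses unsatisfied by $\sigma$ and $\mathcal U_\Phi(\sigma)=|U_\Phi(\sigma)|$. $T(\Phi)=\{\tau\in\{0,1\}^n:\mathcal U_\Phi(\tau)\le n\rho/10\}$. $\mathrm{dist}$ is Hamming distance, and $\Delta(\sigma,\tau)=\{x: \sigma(x)\ne\tau(x)\}$. For $r_1,r_2\ge0$, $\mathcal D_\sigma(r_1,r_2)=\{\tau\in\{0,1\}^n:\lfloor r_1\kappa n\rfloor\le \mathrm{dist}(\sigma,\tau)\le\lfloor r_2\kappa n\rfloor\}$. For $W\subseteq\{x_1,\dots,x_n\}$, $X_\Phi(W,\sigma)=\sum_{i\in U_\Phi(\sigma)}\sum_{j\in[k]}\mathbf 1\{|\Phi_{ij}|\in W\}$. A mist of $\Phi$ is a set $\mathcal M\subseteq T(\Phi)$ such that (MI1) distinct elements of $\mathcal M$ have Hamming distance at least $2\kappa n$, and (MI2) for every $\sigma\in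 T(\Phi)$ there is $\mu\in\mathcal M$ with $\mathrm{dist}(\mu,\sigma)\le 2\kappa n$. Let $\mathcal D(\Phi,\mathcal M)=\bigcup_{\sigma\in\mathcal M}\mathcal D_\sigma(0,10)$. $\Phi$ is quasirandom if there is a mist $\mathcal M$ with: (Q1) $|\mathcal D(\Phi,\mathcal M)|\le 2^n\exp(-2n/k^2)$; (Q2) for every $\tau\in\{0,1\}^n$, $|\mathcal M\cap\mathcal D_\tau(0,10)|\le k$; (Q3) for every $\mu\in\mathcal M$ and every $\sigma\in\mathcal D_\mu(0,100)\setminus T(\Phi)$, $X_\Phi(\Delta(\mu,\sigma),\sigma)\le k\,\mathcal U_\Phi(\sigma)/10$. Walksat$(\Phi,\omega)$: choose $\sigma^{[0]}$ uniformly at random; for $i=0,\dots,\omega$, if $\sigma^{[i]}$ satisfies $\Phi$ output it and halt, else pick $i'\in U_\Phi(\sigma^{[i]})$ and $j\in[k]$ uniformly at random and flip the variable $|\Phi_{i'j}|$ to get $\sigma^{[i+1]}$; otherwise output failure. $\mathrm{suc}(\Phi,\omega)$ is the probability over the algorithm's randomness that it finds a satisfying assignment. *)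

theory Defs
  imports "HOL-Probability.Probability"
begin

text \<open>Variables are x_0,...,x_{n-1} (indices < n). An assignment sigma in {0,1}^n is
  represented by the set of variables it sets to true (a subset of {..<n}).
  A literal is a pair (v, b): variable v, satisfied iff the value of v equals b.\<close>

type_synonym lit = "nat \<times> bool"
type_synonym cnf = "lit list list"

definition lit_sat :: "nat set \<Rightarrow> lit \<Rightarrow> bool" where
  "lit_sat \<sigma> l = ((fst l \<in> \<sigma>) = snd l)"

definition is_kCNF :: "nat \<Rightarrow> nat \<Rightarrow> cnf \<Rightarrow> bool" where
  "is_kCNF n k \<Phi> = (\<forall>c\<in>set \<Phi>. length c = k \<and> (\<forall>l\<in>set c. fst l < n))"

definition unsat :: "cnf \<Rightarrow> nat set \<Rightarrow> nat set" where
  "unsat \<Phi> \<sigma> = {i. i < length \<Phi> \<and> \<not> (\<exists>l\<in>set (\<Phi> ! i). lit_sat \<sigma> l)}"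

definition symdiff :: "nat set \<Rightarrow> nat set \<Rightarrow> nat set" where
  "symdiff \<sigma> \<tau> = (\<sigma> - \<tau>) \<union> (\<tau> - \<sigma>)"

definition hdist :: "nat set \<Rightarrow> nat set \<Rightarrow> nat" where
  "hdist \<sigma> \<tau> = card (symdiff \<sigma> \<tau>)"

definition rho :: "nat \<Rightarrow> nat \<Rightarrow> nat \<Rightarrow> real" where
  "rho n k m = real m / (2 ^ k * real n)"

definition kappa :: "nat \<Rightarrow> real" where
  "kappa k = ln (real k) / real k"

definition Tset :: "nat \<Rightarrow> nat \<Rightarrow> cnf \<Rightarrow> nat set set" where
  "Tset n k \<Phi> = {\<tau> \<in> Pow {..<n}.
      real (card (unsat \<Phi> \<tau>)) \<le> real n * rho n k (length \<Phi>) / 10}"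

definition Dball :: "nat \<Rightarrow> nat \<Rightarrow> nat set \<Rightarrow> real \<Rightarrow> real \<Rightarrow> nat set set" where
  "Dball n k \<sigma> r1 r2 = {\<tau> \<in> Pow {..<n}.
      \<lfloor>r1 * kappa k * real n\<rfloor> \<le> int (hdist \<sigma> \<tau>) \<and>
      int (hdist \<sigma> \<tau>) \<le> \<lfloor>r2 * kappa k * real n\<rfloor>}"

definition Xcount :: "cnf \<Rightarrow> nat set \<Rightarrow> nat set \<Rightarrow> nat" where
  "Xcount \<Phi> W \<sigma> = (\<Sum>i\<in>unsat \<Phi> \<sigma>. \<Sum>j<length (\<Phi> ! i).
      (if fst (\<Phi> ! i ! j) \<in> W then 1 else 0))"

definition is_mist :: "nat \<Rightarrow> nat \<Rightarrow> cnf \<Rightarrow> nat set set \<Rightarrow> bool" where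
  "is_mist n k \<Phi> M =
     (M \<subseteq> Tset n k \<Phi> \<and>
      (\<forall>\<mu>\<in>M. \<forall>\<nu>\<in>M. \<mu> \<noteq> \<nu> \<longrightarrow> real (hdist \<mu> \<nu>) \<ge> 2 * kappa k * real n) \<and>
      (\<forall>\<sigma>\<in>Tset n k \<Phi>. \<exists>\<mu>\<in>M. real (hdist \<mu> \<sigma>) \<le> 2 * kappa k * real n))"

definition Dmist :: "nat \<Rightarrow> nat \<Rightarrow> nat set set \<Rightarrow> nat set set" where
  "Dmist n k M = (\<Union>\<sigma>\<in>M. Dball n k \<sigma> 0 10)"

definition quasirandom :: "nat \<Rightarrow> nat \<Rightarrow> cnf \<Rightarrow> bool" where
  "quasirandom n k \<Phi> =
     (\<exists>M. is_mist n k \<Phi> M \<and>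
        real (card (Dmist n k M)) \<le> 2 ^ n * exp (- 2 * real n / real k ^ 2) \<and>
        (\<forall>\<tau>\<in>Pow {..<n}. card (M \<inter> Dball n k \<tau> 0 10) \<le> k) \<and>
        (\<forall>\<mu>\<in>M. \<forall>\<sigma>\<in>Dball n k \<mu> 0 100 - Tset n k \<Phi>.
           real (Xcount \<Phi> (symdiff \<mu> \<sigma>) \<sigma>) \<le> real k * real (card (unsat \<Phi> \<sigma>)) / 10))"

text \<open>Once a satisfying assignment is reached the chain stays there
  (corresponding to the algorithm halting), so the algorithm succeeds within
  omega flips iff the state after omega steps satisfies Phi.\<close>

definition flip :: "nat set \<Rightarrow> nat \<Rightarrow> nat set" where
  "flip \<sigma> v = (if v \<in> \<sigma> then \<sigma> - {v} else insert v \<sigma>)"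

definition ws_step :: "cnf \<Rightarrow> nat set \<Rightarrow> nat set pmf" where
  "ws_step \<Phi> \<sigma> =
     (if unsat \<Phi> \<sigma> = {} then return_pmf \<sigma>
      else map_pmf (\<lambda>(i, j). flip \<sigma> (fst (\<Phi> ! i ! j)))
             (pmf_of_set (SIGMA i:unsat \<Phi> \<sigma>. {..<length (\<Phi> ! i)})))"

primrec ws_run :: "nat \<Rightarrow> cnf \<Rightarrow> nat \<Rightarrow> nat set pmf" where
  "ws_run n \<Phi> 0 = pmf_of_set (Pow {..<n})"
| "ws_run n \<Phi> (Suc t) = bind_pmf (ws_run n \<Phi> t) (ws_step \<Phi>)"

definition suc_prob :: "nat \<Rightarrow> cnf \<Rightarrow> nat \<Rightarrow> real" where
  "suc_prob n \<Phi> \<omega> = measure_pmf.prob (ws_run n \<Phi> \<omega>) {\<sigma>. unsat \<Phi> \<sigma> = {}}"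

end

theory Submission
  imports Defs
begin


lemma symdiff_comm: "symdiff a b = symdiff b a"
  unfolding symdiff_def by blast

lemma hdist_comm: "hdist a b = hdist b a"
  unfolding hdist_def by (simp add: symdiff_comm)

lemma symdiff_flip:
  "symdiff \<mu> (flip \<sigma> v) = (if v \<in> symdiff \<mu> \<sigma> then symdiff \<mu> \<sigma> - {v} else insert v (symdiff \<mu> \<sigma>))"
  unfolding symdiff_def flip_def by auto

lemma hdist_flip:
  assumes "finite \<mu>" "finite \<sigma>"
  shows "hdist \<mu> (flip \<sigma> v) = (if v \<in> symdiff \<mu> \<sigma> then hdist \<mu> \<sigma> - 1 else Suc (hdist \<mu> \<sigma>))"
    and "v \<in> symdiff \<mu> \<sigma> \<Longrightarrow> hdist \<mu> \<sigma> \<ge> 1"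
proof -
  have fin: "finite (symdiff \<mu> \<sigma>)" using assms unfolding symdiff_def by auto
  show "hdist \<mu> (flip \<sigma> v) = (if v \<in> symdiff \<mu> \<sigma> then hdist \<mu> \<sigma> - 1 else Suc (hdist \<mu> \<sigma>))"
    unfolding hdist_def symdiff_flip using fin by auto
  show "v \<in> symdiff \<mu> \<sigma> \<Longrightarrow> hdist \<mu> \<sigma> \<ge> 1"
    unfolding hdist_def using fin by (metis One_nat_def card_0_eq empty_iff less_one not_le)
qed

definition hval :: "int \<Rightarrow> real \<Rightarrow> nat set \<Rightarrow> nat set \<Rightarrow> real" where
  "hval D c \<mu> \<sigma> = (if int (hdist \<mu> \<sigma>) \<le> D then 3 powr (c - real (hdist \<mu> \<sigma>)) else 0)"

lemma hval_nonneg: "hval D c \<mu> \<sigma> \<ge> 0"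
  unfolding hval_def by auto

lemma hval_flip:
  assumes "finite \<mu>" "finite \<sigma>"
  shows "hval D c \<mu> (flip \<sigma> v) \<le>
    (if int (hdist \<mu> \<sigma>) \<le> D then (if v \<in> symdiff \<mu> \<sigma> then 3 * hval D c \<mu> \<sigma> else hval D c \<mu> \<sigma> / 3)
     else if int (hdist \<mu> \<sigma>) = D + 1 then 3 powr (c - of_int D) else 0)"
proof -
  define d where "d = hdist \<mu> \<sigma>"
  note hf = hdist_flip[OF assms, of v, folded d_def]
  show ?thesis
  proof (cases "v \<in> symdiff \<mu> \<sigma>")
    case True
    then have d1: "d \<ge> 1" and e: "hdist \<mu> (flip \<sigma> v) = d - 1" using hf by auto
    have r: "real (d - 1) = real d - 1" using d1 by simp
    have p: "3 powr (c - (real d - 1)) = 3 * 3 powr (c - real d)"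
    proof -
      have "c - (real d - 1) = 1 + (c - real d)" by simp
      then have "3 powr (c - (real d - 1)) = 3 powr 1 * 3 powr (c - real d)"
        by (metis powr_add)
      then show ?thesis by simp
    qed
    show ?thesis
    proof (cases "int d \<le> D")
      case True
      then show ?thesis using d1 `v \<in> symdiff \<mu> \<sigma>` unfolding hval_def d_def[symmetric] e r p by auto
    next
      case False
      show ?thesis
      proof (cases "int d = D + 1")
        case True
        then have "real d - 1 = of_int D" by linarith
        then show ?thesis using True False d1 unfolding hval_def d_def[symmetric] e r by auto
      next
        case F2: False
        then show ?thesis using False d1 unfolding hval_def d_def[symmetric] e r by auto
      qed
    qed
  next
    case False
    then have e: "hdist \<mu> (flip \<sigma> v) = Suc d" using hf by auto
    have p: "3 powr (c - real (Suc d)) = 3 powr (c - real d) / 3"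
    proof -
      have "c - real (Suc d) = (c - real d) - 1" by simp
      then have "3 powr (c - real (Suc d)) = 3 powr (c - real d) / 3 powr 1"
        by (metis powr_diff)
      then show ?thesis by simp
    qed
    show ?thesis using False unfolding hval_def d_def[symmetric] e p by auto
  qed
qed

lemma hval_sum_flip:
  fixes S :: "'a set" and g :: "'a \<Rightarrow> nat"
  assumes S: "finite S" and fin: "finite \<mu>" "finite \<sigma>"
    and X: "int (hdist \<mu> \<sigma>) \<le> D \<Longrightarrow>
       (\<Sum>s\<in>S. if g s \<in> symdiff \<mu> \<sigma> then 1 else (0::real)) \<le> real (card S) / 10"
  shows "(\<Sum>s\<in>S. hval D c \<mu> (flip \<sigma> (g s))) \<le> real (card S) * hval D c \<mu> \<sigma>
     + real (card S) * (if int (hdist \<mu> \<sigma>) = D + 1 then 3 powr (c - of_int D) else 0)"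
proof -
  define h where "h = hval D c \<mu> \<sigma>"
  have h0: "h \<ge> 0" unfolding h_def by (rule hval_nonneg)
  have step: "(\<Sum>s\<in>S. hval D c \<mu> (flip \<sigma> (g s))) \<le> (\<Sum>s\<in>S.
    (if int (hdist \<mu> \<sigma>) \<le> D then (if g s \<in> symdiff \<mu> \<sigma> then 3 * h else h / 3)
     else if int (hdist \<mu> \<sigma>) = D + 1 then 3 powr (c - of_int D) else 0))"
    unfolding h_def by (intro sum_mono hval_flip fin)
  show ?thesis
  proof (cases "int (hdist \<mu> \<sigma>) \<le> D")
    case True
    have "(\<Sum>s\<in>S. (if g s \<in> symdiff \<mu> \<sigma> then 3 * h else h / 3))
        = (\<Sum>s\<in>S. h / 3 + (8/3) * h * (if g s \<in> symdiff \<mu> \<sigma> then 1 else (0::real)))"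
      by (intro sum.cong) auto
    also have "\<dots> = real (card S) * h / 3 + (8/3) * h * (\<Sum>s\<in>S. if g s \<in> symdiff \<mu> \<sigma> then 1 else (0::real))"
      by (simp add: sum.distrib sum_distrib_left)
    also have "\<dots> \<le> real (card S) * h / 3 + (8/3) * h * (real (card S) / 10)"
      using X[OF True] h0 by (intro add_left_mono mult_left_mono) auto
    also have "\<dots> \<le> real (card S) * h" using h0 by (simp add: field_simps)
    finally show ?thesis using step True h0 unfolding h_def by auto
  next
    case False
    then have "hval D c \<mu> \<sigma> = 0" by (simp add: hval_def)
    then show ?thesis using step False by auto
  qed
qed



definition Fpot :: "nat set set \<Rightarrow> int \<Rightarrow> real \<Rightarrow> nat set \<Rightarrow> real" where
  "Fpot M D c \<sigma> = (\<Sum>\<mu>\<in>M. hval D c \<mu> \<sigma>)"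

definition Gpot :: "nat set set \<Rightarrow> int \<Rightarrow> real \<Rightarrow> nat set \<Rightarrow> real" where
  "Gpot M D c \<sigma> = min 1 (Fpot M D c \<sigma>)"

lemma Fpot_nonneg: "Fpot M D c \<sigma> \<ge> 0"
  unfolding Fpot_def by (intro sum_nonneg hval_nonneg)

lemma Gpot_le1: "Gpot M D c \<sigma> \<le> 1" unfolding Gpot_def by simp
lemma Gpot_nonneg: "Gpot M D c \<sigma> \<ge> 0" unfolding Gpot_def using Fpot_nonneg by simp

lemma unsat_subset: "unsat \<Phi> \<sigma> \<subseteq> {..<length \<Phi>}"
  unfolding unsat_def by auto

lemma finite_unsat: "finite (unsat \<Phi> \<sigma>)"
  using unsat_subset finite_subset by blast

lemma rho_nonneg: "rho n k m \<ge> 0"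
  unfolding rho_def by simp

lemma kappa_nonneg: "k \<ge> 1 \<Longrightarrow> kappa k \<ge> 0"
  unfolding kappa_def by simp

context
  fixes n k :: nat and \<Phi> :: cnf and M :: "nat set set" and D :: int and c :: real
  assumes kcnf: "is_kCNF n k \<Phi>" and k1: "k \<ge> 1"
    and Mmist: "is_mist n k \<Phi> M"
    and Q2: "\<forall>\<tau>\<in>Pow {..<n}. card (M \<inter> Dball n k \<tau> 0 10) \<le> k"
    and Q3: "\<forall>\<mu>\<in>M. \<forall>\<sigma>\<in>Dball n k \<mu> 0 100 - Tset n k \<Phi>.
           real (Xcount \<Phi> (symdiff \<mu> \<sigma>) \<sigma>) \<le> real k * real (card (unsat \<Phi> \<sigma>)) / 10"
    and Ddef: "D = \<lfloor>10 * kappa k * real n\<rfloor> - 1"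
    and c1: "2 * kappa k * real n \<le> c" and c2: "c \<le> of_int D"
begin

lemma M_Pow: "M \<subseteq> Pow {..<n}"
  using Mmist unfolding is_mist_def Tset_def by auto

lemma finite_M: "finite M"
  using M_Pow by (meson finite_Pow_iff finite_lessThan finite_subset)

lemma Gpot_T: assumes "\<sigma> \<in> Tset n k \<Phi>" shows "Gpot M D c \<sigma> = 1"
proof -
  obtain \<mu> where mu: "\<mu> \<in> M" "real (hdist \<mu> \<sigma>) \<le> 2 * kappa k * real n"
    using Mmist assms unfolding is_mist_def by blast
  have "int (hdist \<mu> \<sigma>) \<le> D" using mu c1 c2 by linarith
  then have "hval D c \<mu> \<sigma> = 3 powr (c - real (hdist \<mu> \<sigma>))" by (simp add: hval_def)
  also have "\<dots> \<ge> 1" using mu c1 by (intro ge_one_powr_ge_zero) auto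
  finally have "1 \<le> hval D c \<mu> \<sigma>" .
  also have "\<dots> \<le> Fpot M D c \<sigma>" unfolding Fpot_def
    using mu finite_M by (intro member_le_sum hval_nonneg) auto
  finally show ?thesis unfolding Gpot_def by simp
qed

lemma var_lt:
  assumes "i \<in> unsat \<Phi> \<sigma>" "j < length (\<Phi> ! i)"
  shows "fst (\<Phi> ! i ! j) < n" "length (\<Phi> ! i) = k"
proof -
  have "\<Phi> ! i \<in> set \<Phi>" using assms unfolding unsat_def by auto
  then show "fst (\<Phi> ! i ! j) < n" "length (\<Phi> ! i) = k"
    using kcnf assms(2) unfolding is_kCNF_def by auto
qed

lemma flip_Pow: "\<sigma> \<in> Pow {..<n} \<Longrightarrow> v < n \<Longrightarrow> flip \<sigma> v \<in> Pow {..<n}"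
  unfolding flip_def by auto

lemma step_Pow:
  assumes "\<sigma> \<in> Pow {..<n}"
  shows "set_pmf (ws_step \<Phi> \<sigma>) \<subseteq> Pow {..<n}"
proof (cases "unsat \<Phi> \<sigma> = {}")
  case True then show ?thesis using assms unfolding ws_step_def by simp
next
  case False
  define S where "S = (SIGMA i:unsat \<Phi> \<sigma>. {..<length (\<Phi> ! i)})"
  have finS: "finite S" unfolding S_def using finite_unsat by auto
  have neS: "S \<noteq> {}"
  proof -
    obtain i where i: "i \<in> unsat \<Phi> \<sigma>" using False by auto
    have "length (\<Phi> ! i) = k"
    proof -
      have "\<Phi> ! i \<in> set \<Phi>" using i unfolding unsat_def by auto
      then show ?thesis using kcnf unfolding is_kCNF_def by auto
    qed
    then have "(i, 0) \<in> S" using i k1 unfolding S_def by auto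
    then show ?thesis by auto
  qed
  have "\<And>s. s \<in> S \<Longrightarrow> flip \<sigma> (fst (\<Phi> ! fst s ! snd s)) \<in> Pow {..<n}"
  proof -
    fix s assume "s \<in> S"
    then have "fst s \<in> unsat \<Phi> \<sigma>" "snd s < length (\<Phi> ! fst s)" unfolding S_def by auto
    then show "flip \<sigma> (fst (\<Phi> ! fst s ! snd s)) \<in> Pow {..<n}"
      using flip_Pow[OF assms var_lt(1)] by blast
  qed
  then have "(\<lambda>(i, j). flip \<sigma> (fst (\<Phi> ! i ! j))) ` S \<subseteq> Pow {..<n}"
    by (intro image_subsetI) (simp add: case_prod_beta del: Pow_iff)
  then show ?thesis using False finS neS unfolding ws_step_def S_def[symmetric]
    by simp
qed

lemma step_exp:
  assumes sP: "\<sigma> \<in> Pow {..<n}"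
  shows "measure_pmf.expectation (ws_step \<Phi> \<sigma>) (Gpot M D c)
           \<le> Gpot M D c \<sigma> + real k * 3 powr (c - of_int D)"
proof (cases "unsat \<Phi> \<sigma> = {}")
  case True then show ?thesis unfolding ws_step_def by simp
next
  case False
  define U where "U = unsat \<Phi> \<sigma>"
  define S where "S = (SIGMA i:U. {..<length (\<Phi> ! i)})"
  define g where "g = (\<lambda>s. fst (\<Phi> ! fst s ! snd s))"
  define P where "P = 3 powr (c - of_int D)"
  have P0: "P \<ge> 0" unfolding P_def by simp
  have finU: "finite U" unfolding U_def by (rule finite_unsat)
  have finS: "finite S" unfolding S_def using finU by auto
  have lenk: "\<And>i. i \<in> U \<Longrightarrow> length (\<Phi> ! i) = k"
  proof -
    fix i assume i: "i \<in> U"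
    have "\<Phi> ! i \<in> set \<Phi>" using i unfolding unsat_def U_def by auto
    then show "length (\<Phi> ! i) = k" using kcnf unfolding is_kCNF_def by auto
  qed
  have cardS: "card S = card U * k"
  proof -
    have "card S = (\<Sum>i\<in>U. card {..<length (\<Phi> ! i)})" unfolding S_def using finU by simp
    also have "\<dots> = (\<Sum>i\<in>U. k)" using lenk by (intro sum.cong) auto
    finally show ?thesis by simp
  qed
  have cS0: "card S > 0" using cardS False k1 finU unfolding U_def by (simp add: card_gt_0_iff)
  then have neS: "S \<noteq> {}" by auto
  have ws: "ws_step \<Phi> \<sigma> = map_pmf (\<lambda>s. flip \<sigma> (g s)) (pmf_of_set S)"
  proof -
    have "(\<lambda>(i, j). flip \<sigma> (fst (\<Phi> ! i ! j))) = (\<lambda>s. flip \<sigma> (g s))"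
      unfolding g_def by (auto simp: fun_eq_iff)
    then show ?thesis
      using False unfolding ws_step_def U_def[symmetric] S_def[symmetric] by simp
  qed
  have E: "measure_pmf.expectation (ws_step \<Phi> \<sigma>) (Gpot M D c)
      = (\<Sum>s\<in>S. Gpot M D c (flip \<sigma> (g s))) / real (card S)"
    unfolding ws using neS finS by (simp add: integral_pmf_of_set)
  have E1: "(\<Sum>s\<in>S. Gpot M D c (flip \<sigma> (g s))) \<le> real (card S)"
    using sum_mono[of S "\<lambda>s. Gpot M D c (flip \<sigma> (g s))" "\<lambda>_. 1"] Gpot_le1 by auto
  show ?thesis
  proof (cases "\<sigma> \<in> Tset n k \<Phi>")
    case True
    have "measure_pmf.expectation (ws_step \<Phi> \<sigma>) (Gpot M D c) \<le> 1"
      unfolding E using E1 cS0 by (simp add: divide_le_eq)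
    moreover have "real k * P \<ge> 0" using P0 by simp
    ultimately show ?thesis using Gpot_T[OF True] unfolding P_def by linarith
  next
    case notT: False
    have permu: "\<And>\<mu>. \<mu> \<in> M \<Longrightarrow> (\<Sum>s\<in>S. hval D c \<mu> (flip \<sigma> (g s))) \<le> real (card S) * hval D c \<mu> \<sigma>
        + real (card S) * (if int (hdist \<mu> \<sigma>) = D + 1 then P else 0)"
    proof -
      fix \<mu> assume mu: "\<mu> \<in> M"
      have finmu: "finite \<mu>" using mu M_Pow finite_subset by auto
      have fins: "finite \<sigma>" using sP finite_subset by auto
      show "?thesis \<mu>" unfolding P_def
      proof (rule hval_sum_flip[OF finS finmu fins])
        assume dD: "int (hdist \<mu> \<sigma>) \<le> D"
        have kn: "kappa k * real n \<ge> 0" using kappa_nonneg[OF k1] by simp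
        have "\<lfloor>10 * kappa k * real n\<rfloor> \<le> \<lfloor>100 * kappa k * real n\<rfloor>"
          using kn by (intro floor_mono) linarith
        then have "\<sigma> \<in> Dball n k \<mu> 0 100" using sP dD Ddef unfolding Dball_def by auto
        then have X: "real (Xcount \<Phi> (symdiff \<mu> \<sigma>) \<sigma>) \<le> real k * real (card U) / 10"
          using Q3 mu notT unfolding U_def by blast
        have "Xcount \<Phi> (symdiff \<mu> \<sigma>) \<sigma> = (\<Sum>s\<in>S. if g s \<in> symdiff \<mu> \<sigma> then 1 else 0)"
          unfolding Xcount_def U_def[symmetric] S_def g_def
          using finU by (subst sum.Sigma) (auto simp: case_prod_beta)
        then have "(\<Sum>s\<in>S. if g s \<in> symdiff \<mu> \<sigma> then 1 else (0::real)) = real (Xcount \<Phi> (symdiff \<mu> \<sigma>) \<sigma>)"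
          by (auto simp: of_nat_sum intro!: sum.cong)
        then show "(\<Sum>s\<in>S. if g s \<in> symdiff \<mu> \<sigma> then 1 else (0::real)) \<le> real (card S) / 10"
          using X cardS by (simp add: mult.commute)
      qed
    qed
    have cnt: "card {\<mu>\<in>M. int (hdist \<mu> \<sigma>) = D + 1} \<le> k"
    proof -
      have "{\<mu>\<in>M. int (hdist \<mu> \<sigma>) = D + 1} \<subseteq> M \<inter> Dball n k \<sigma> 0 10"
        using M_Pow Ddef hdist_comm unfolding Dball_def by auto
      then have "card {\<mu>\<in>M. int (hdist \<mu> \<sigma>) = D + 1} \<le> card (M \<inter> Dball n k \<sigma> 0 10)"
        using finite_M by (intro card_mono) auto
      also have "\<dots> \<le> k" using Q2 sP by blast
      finally show ?thesis .
    qed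
    have "(\<Sum>s\<in>S. Gpot M D c (flip \<sigma> (g s))) \<le> (\<Sum>s\<in>S. Fpot M D c (flip \<sigma> (g s)))"
      unfolding Gpot_def by (intro sum_mono) auto
    also have "\<dots> = (\<Sum>\<mu>\<in>M. \<Sum>s\<in>S. hval D c \<mu> (flip \<sigma> (g s)))"
      unfolding Fpot_def by (rule sum.swap)
    also have "\<dots> \<le> (\<Sum>\<mu>\<in>M. real (card S) * hval D c \<mu> \<sigma>
        + real (card S) * (if int (hdist \<mu> \<sigma>) = D + 1 then P else 0))"
      by (intro sum_mono permu)
    also have "\<dots> = real (card S) * Fpot M D c \<sigma> + real (card S) * P * real (card {\<mu>\<in>M. int (hdist \<mu> \<sigma>) = D + 1})"
      unfolding Fpot_def sum.distrib sum_distrib_left[symmetric]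
      using finite_M by (simp add: sum.If_cases Int_def)
    also have "\<dots> \<le> real (card S) * Fpot M D c \<sigma> + real (card S) * P * real k"
      using cnt P0 by (intro add_left_mono mult_left_mono) auto
    finally have E2: "(\<Sum>s\<in>S. Gpot M D c (flip \<sigma> (g s))) \<le> real (card S) * (Fpot M D c \<sigma> + real k * P)"
      by (simp add: algebra_simps)
    have Ea: "measure_pmf.expectation (ws_step \<Phi> \<sigma>) (Gpot M D c) \<le> 1"
      unfolding E using E1 cS0 by (simp add: divide_le_eq)
    have Eb: "measure_pmf.expectation (ws_step \<Phi> \<sigma>) (Gpot M D c) \<le> Fpot M D c \<sigma> + real k * P"
      unfolding E using E2 cS0 by (simp add: divide_le_eq mult.commute)
    have kP: "real k * P \<ge> 0" using P0 by simp
    show ?thesis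
    proof (cases "Fpot M D c \<sigma> \<ge> 1")
      case True
      then have "Gpot M D c \<sigma> = 1" unfolding Gpot_def by simp
      then show ?thesis using Ea kP unfolding P_def by linarith
    next
      case False
      then have "Gpot M D c \<sigma> = Fpot M D c \<sigma>" unfolding Gpot_def by simp
      then show ?thesis using Eb unfolding P_def by linarith
    qed
  qed
qed

lemma run_Pow: "set_pmf (ws_run n \<Phi> t) \<subseteq> Pow {..<n}"
proof (induction t)
  case 0
  have "set_pmf (pmf_of_set (Pow {..<n})) = Pow {..<n}" by (rule set_pmf_of_set) auto
  then show ?case by simp
next
  case (Suc t)
  then show ?case using step_Pow by (auto simp: set_bind_pmf simp del: Pow_iff)
qed

lemma exp_sum:
  assumes "set_pmf p \<subseteq> Pow {..<n}"
  shows "measure_pmf.expectation p (f :: nat set \<Rightarrow> real) = (\<Sum>a\<in>Pow {..<n}. pmf p a * f a)"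
  using assms by (subst integral_measure_pmf[of "Pow {..<n}"]) auto

lemma run_exp:
  "measure_pmf.expectation (ws_run n \<Phi> t) (Gpot M D c)
     \<le> measure_pmf.expectation (ws_run n \<Phi> 0) (Gpot M D c) + real t * (real k * 3 powr (c - of_int D))"
proof (induction t)
  case 0 then show ?case by simp
next
  case (Suc t)
  define L where "L = real k * 3 powr (c - of_int D)"
  define A where "A = Pow {..<n}"
  have finA: "finite A" unfolding A_def by simp
  have "measure_pmf.expectation (ws_run n \<Phi> (Suc t)) (Gpot M D c)
      = (\<Sum>a\<in>A. pmf (ws_run n \<Phi> t) a * measure_pmf.expectation (ws_step \<Phi> a) (Gpot M D c))"
  proof -
    have h1: "finite (Pow {..<n})" by simp
    have h2: "\<And>x. x \<in> Pow {..<n} \<Longrightarrow> finite (set_pmf (ws_step \<Phi> x))"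
      using step_Pow h1 finite_subset by blast
    show ?thesis unfolding ws_run.simps A_def
      using pmf_expectation_bind[OF h1 h2 run_Pow[of t], where h = "Gpot M D c"] by simp
  qed
  also have "\<dots> \<le> (\<Sum>a\<in>A. pmf (ws_run n \<Phi> t) a * (Gpot M D c a + L))"
    unfolding L_def A_def by (intro sum_mono mult_left_mono step_exp) auto
  also have "\<dots> = (\<Sum>a\<in>A. pmf (ws_run n \<Phi> t) a * Gpot M D c a) + L * (\<Sum>a\<in>A. pmf (ws_run n \<Phi> t) a)"
    by (simp add: algebra_simps sum.distrib sum_distrib_left)
  also have "(\<Sum>a\<in>A. pmf (ws_run n \<Phi> t) a) = 1"
    using finA run_Pow unfolding A_def by (intro sum_pmf_eq_1) auto
  also have "(\<Sum>a\<in>A. pmf (ws_run n \<Phi> t) a * Gpot M D c a) = measure_pmf.expectation (ws_run n \<Phi> t) (Gpot M D c)"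
    unfolding A_def by (rule exp_sum[symmetric, OF run_Pow])
  finally show ?case using Suc unfolding L_def by (simp add: algebra_simps)
qed

lemma start_exp:
  "measure_pmf.expectation (ws_run n \<Phi> 0) (Gpot M D c) \<le> real (card (Dmist n k M)) / 2 ^ n"
proof -
  define A where "A = Pow {..<n}"
  have finA: "finite A" and cA: "card A = 2 ^ n" unfolding A_def by (auto simp: card_Pow)
  have neA: "A \<noteq> {}" unfolding A_def by auto
  have "measure_pmf.expectation (ws_run n \<Phi> 0) (Gpot M D c) = (\<Sum>a\<in>A. Gpot M D c a) / card A"
    unfolding A_def ws_run.simps by (rule integral_pmf_of_set) (auto)
  also have "(\<Sum>a\<in>A. Gpot M D c a) \<le> (\<Sum>a\<in>A. if a \<in> Dmist n k M then 1 else 0)"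
  proof (intro sum_mono)
    fix a assume a: "a \<in> A"
    show "Gpot M D c a \<le> (if a \<in> Dmist n k M then 1 else 0)"
    proof (cases "a \<in> Dmist n k M")
      case True then show ?thesis using Gpot_le1 by simp
    next
      case False
      have "\<And>\<mu>. \<mu> \<in> M \<Longrightarrow> hval D c \<mu> a = 0"
      proof -
        fix \<mu> assume mu: "\<mu> \<in> M"
        then have "a \<notin> Dball n k \<mu> 0 10" using False unfolding Dmist_def by auto
        then have "\<not> int (hdist \<mu> a) \<le> D" using a Ddef unfolding Dball_def A_def by auto
        then show "hval D c \<mu> a = 0" unfolding hval_def by simp
      qed
      then have "Fpot M D c a = 0" unfolding Fpot_def by simp
      then show ?thesis using False unfolding Gpot_def by simp
    qed
  qed
  also have "\<dots> = real (card (A \<inter> Dmist n k M))"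
    using finA by (simp add: sum.If_cases)
  also have "\<dots> \<le> real (card (Dmist n k M))"
  proof -
    have "Dmist n k M \<subseteq> A" unfolding Dmist_def Dball_def A_def by auto
    then show ?thesis by (simp add: Int_absorb1)
  qed
  finally show ?thesis using cA by (simp add: divide_right_mono)
qed

lemma suc_le_exp: "suc_prob n \<Phi> t \<le> measure_pmf.expectation (ws_run n \<Phi> t) (Gpot M D c)"
proof -
  define p where "p = ws_run n \<Phi> t"
  define A where "A = Pow {..<n}"
  define Sat where "Sat = {\<sigma>. unsat \<Phi> \<sigma> = {}}"
  have sp: "set_pmf p \<subseteq> A" unfolding p_def A_def by (rule run_Pow)
  have finA: "finite A" unfolding A_def by simp
  have "suc_prob n \<Phi> t = measure_pmf.prob p (Sat \<inter> set_pmf p)"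
    unfolding suc_prob_def p_def Sat_def by (simp add: measure_Int_set_pmf)
  also have "\<dots> = (\<Sum>a\<in>Sat \<inter> set_pmf p. pmf p a)"
    using sp finA by (intro measure_measure_pmf_finite) (auto intro: finite_subset)
  also have "\<dots> \<le> (\<Sum>a\<in>A. pmf p a * Gpot M D c a)"
  proof -
    have "(\<Sum>a\<in>Sat \<inter> set_pmf p. pmf p a) = (\<Sum>a\<in>Sat \<inter> set_pmf p. pmf p a * Gpot M D c a)"
    proof (intro sum.cong refl)
      fix a assume a: "a \<in> Sat \<inter> set_pmf p"
      then have "a \<in> Tset n k \<Phi>" using sp rho_nonneg[of n k "length \<Phi>"]
        unfolding Tset_def Sat_def A_def by (auto simp del: Pow_iff)
      then show "pmf p a = pmf p a * Gpot M D c a" using Gpot_T by simp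
    qed
    also have "\<dots> \<le> (\<Sum>a\<in>A. pmf p a * Gpot M D c a)"
      using sp finA by (intro sum_mono2) (auto simp: Gpot_nonneg)
    finally show ?thesis .
  qed
  also have "\<dots> = measure_pmf.expectation p (Gpot M D c)"
    unfolding A_def by (rule exp_sum[symmetric]) (use sp A_def in auto)
  finally show ?thesis unfolding p_def .
qed

end


lemma ln_ge1: "k \<ge> 3 \<Longrightarrow> ln (real k) \<ge> 1"
proof -
  assume k: "k \<ge> 3"
  have "exp 1 \<le> real k" using exp_le k by linarith
  then show ?thesis using k by (subst ln_ge_iff) auto
qed

lemma final_arith:
  fixes k n :: nat
  assumes k: "k \<ge> 3" and n: "real n \<ge> 36 * real k ^ 2"
  shows "exp (- 2 * real n / real k ^ 2) + (exp (real n / real k ^ 2) + 1) * (real k * 3 powr (2 - 8 * (kappa k * real n)))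
         \<le> exp (- real n / real k ^ 2)"
proof -
  define t where "t = real n / real k ^ 2"
  define x where "x = kappa k * real n"
  have kpos: "real k > 0" using k by simp
  have t36: "t \<ge> 36" unfolding t_def using n kpos by (simp add: field_simps)
  have xge: "x \<ge> real n / real k"
    unfolding x_def kappa_def using ln_ge1[OF k] kpos
    by (simp add: field_simps) (metis mult.right_neutral mult_left_mono of_nat_0_le_iff)
  have l3: "ln 3 \<ge> (1::real)" using ln_ge1[of 3] by simp
  have p: "3 powr (2 - 8 * x) \<le> 9 * exp (- 8 * (real n / real k))"
  proof -
    have "3 powr (2 - 8 * x) = exp ((2 - 8 * x) * ln 3)" by (simp add: powr_def)
    also have "\<dots> = exp (2 * ln 3) * exp (- (8 * x * ln 3))" by (simp add: exp_add[symmetric] algebra_simps)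
    also have "exp (2 * ln 3) = (9::real)"
    proof -
      have "exp (2 * ln 3) = exp (ln (3::real) + ln 3)" by simp
      also have "\<dots> = exp (ln 3) * exp (ln (3::real))" by (rule exp_add)
      finally show ?thesis by simp
    qed
    also have "exp (- (8 * x * ln 3)) \<le> exp (- 8 * (real n / real k))"
    proof -
      have "x \<ge> 0" using xge by (smt (verit) divide_nonneg_nonneg of_nat_0_le_iff)
      then have "8 * x * ln 3 \<ge> 8 * x" using l3 mult_left_mono[OF l3, of "8*x"] by simp
      then show ?thesis using xge by simp
    qed
    finally show ?thesis by simp
  qed
  have e1: "exp (-2 * t) \<le> exp (- t) / 2"
  proof -
    have "exp t \<ge> 2" using exp_ge_add_one_self[of t] t36 by linarith
    then have "exp (-t) \<le> 1/2" by (simp add: exp_minus field_simps)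
    then have "exp (-t) * exp (-t) \<le> exp (-t) * (1/2)" by (intro mult_left_mono) auto
    moreover have "exp (-2 * t) = exp (-t) * exp (-t)" by (simp add: exp_add[symmetric])
    ultimately show ?thesis by simp
  qed
  have e2: "(exp t + 1) * (real k * (9 * exp (- 8 * (real n / real k)))) \<le> exp (- t) / 2"
  proof -
    define y where "y = real n / real k"
    have ty: "t \<le> y" unfolding t_def y_def using kpos k
      by (simp add: divide_left_mono power2_eq_square)
    have y6: "exp (6 * y) \<ge> 36 * real k"
    proof -
      have "6 * y \<ge> 36 * real k" unfolding y_def using n kpos by (simp add: field_simps power2_eq_square)
      then show ?thesis using exp_ge_add_one_self[of "6*y"] by linarith
    qed
    have "exp t + 1 \<le> 2 * exp t" using exp_ge_add_one_self[of t] t36 by linarith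
    then have "(exp t + 1) * (real k * (9 * exp (- 8 * y))) \<le> 2 * exp t * (real k * (9 * exp (- 8 * y)))"
      by (intro mult_right_mono) auto
    also have "\<dots> = 18 * real k * (exp t * exp (-8 * y))" by simp
    also have "\<dots> \<le> 18 * real k * (exp (- t) / exp (6 * y))"
    proof -
      have "exp t * exp (-8 * y) = exp (- t) * exp (2 * t) * exp (-8 * y)" by (simp add: exp_add[symmetric])
      also have "\<dots> \<le> exp (- t) * exp (2 * y) * exp (-8 * y)" using ty by (intro mult_right_mono mult_left_mono) auto
      also have "\<dots> = exp (- t) / exp (6 * y)" by (simp add: exp_add[symmetric] exp_diff[symmetric] algebra_simps exp_minus field_simps)
      finally show ?thesis using kpos by (intro mult_left_mono) auto
    qed
    also have "\<dots> \<le> 18 * real k * (exp (- t) / (36 * real k))"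
      using y6 kpos by (intro mult_left_mono divide_left_mono) auto
    also have "\<dots> = exp (-t) / 2" using kpos by simp
    finally show ?thesis unfolding y_def .
  qed
  have "(exp t + 1) * (real k * 3 powr (2 - 8 * x)) \<le> (exp t + 1) * (real k * (9 * exp (- 8 * (real n / real k))))"
    using p by (intro mult_left_mono) (auto simp: add_nonneg_nonneg)
  then show ?thesis using e1 e2 unfolding t_def[symmetric] x_def[symmetric]
    by (simp add: t_def)
qed


theorem proposition2:
  shows "\<exists>k0. \<forall>k\<ge>k0. \<exists>n0. \<forall>n\<ge>n0. \<forall>\<Phi>::cnf.
           is_kCNF n k \<Phi> \<and> quasirandom n k \<Phi> \<longrightarrow>
           suc_prob n \<Phi> (nat \<lceil>exp (real n / real k ^ 2)\<rceil>) \<le> exp (- real n / real k ^ 2)"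
proof (rule exI[of _ 3], intro allI impI)
  fix k :: nat assume k3: "k \<ge> 3"
  show "\<exists>n0. \<forall>n\<ge>n0. \<forall>\<Phi>::cnf.
           is_kCNF n k \<Phi> \<and> quasirandom n k \<Phi> \<longrightarrow>
           suc_prob n \<Phi> (nat \<lceil>exp (real n / real k ^ 2)\<rceil>) \<le> exp (- real n / real k ^ 2)"
  proof (rule exI[of _ "36 * k ^ 2"], intro allI impI)
    fix n :: nat and \<Phi> :: cnf
    assume n: "n \<ge> 36 * k ^ 2" and H: "is_kCNF n k \<Phi> \<and> quasirandom n k \<Phi>"
    have kcnf: "is_kCNF n k \<Phi>" using H by simp
    obtain M where mist: "is_mist n k \<Phi> M"
      and Q1: "real (card (Dmist n k M)) \<le> 2 ^ n * exp (- 2 * real n / real k ^ 2)"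
      and Q2: "\<forall>\<tau>\<in>Pow {..<n}. card (M \<inter> Dball n k \<tau> 0 10) \<le> k"
      and Q3: "\<forall>\<mu>\<in>M. \<forall>\<sigma>\<in>Dball n k \<mu> 0 100 - Tset n k \<Phi>.
           real (Xcount \<Phi> (symdiff \<mu> \<sigma>) \<sigma>) \<le> real k * real (card (unsat \<Phi> \<sigma>)) / 10"
      using H unfolding quasirandom_def by blast
    have k1: "k \<ge> 1" using k3 by simp
    have nr: "real n \<ge> 36 * real k ^ 2" using n
      by (metis of_nat_le_iff of_nat_mult of_nat_numeral of_nat_power)
    have kpos: "real k > 0" using k3 by simp
    define x where "x = kappa k * real n"
    have xge: "x \<ge> real n / real k"
      unfolding x_def kappa_def using ln_ge1[OF k3] kpos
      by (simp add: field_simps) (metis mult.right_neutral mult_left_mono of_nat_0_le_iff)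
    have "real n / real k \<ge> 36 * real k" using nr kpos by (simp add: field_simps power2_eq_square)
    moreover have "real k \<ge> 3" using k3 by simp
    ultimately have x1: "x \<ge> 1" using xge by linarith
    define D where "D = \<lfloor>10 * kappa k * real n\<rfloor> - 1"
    define c where "c = 2 * kappa k * real n"
    have Dge: "of_int D \<ge> 10 * x - 2" unfolding D_def x_def
      using floor_correct[of "10 * kappa k * real n"] by (simp add: algebra_simps)
    have c1: "2 * kappa k * real n \<le> c" unfolding c_def by simp
    have c2: "c \<le> of_int D" using Dge x1 unfolding c_def x_def by simp
    note ctx = kcnf k1 mist Q2 Q3 D_def c1 c2
    define t where "t = real n / real k ^ 2"
    define \<omega> where "\<omega> = nat \<lceil>exp t\<rceil>"
    have om: "real \<omega> \<le> exp t + 1"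
    proof -
      have "real \<omega> = of_int \<lceil>exp t\<rceil>" unfolding \<omega>_def
        by (simp add: less_imp_le)
      then show ?thesis by linarith
    qed
    define L where "L = real k * 3 powr (c - of_int D)"
    have L0: "L \<ge> 0" unfolding L_def by simp
    have Lle: "L \<le> real k * 3 powr (2 - 8 * x)"
      unfolding L_def using Dge kpos by (intro mult_left_mono powr_mono) (auto simp: c_def x_def)
    have "suc_prob n \<Phi> \<omega> \<le> measure_pmf.expectation (ws_run n \<Phi> \<omega>) (Gpot M D c)"
      by (rule suc_le_exp[OF ctx])
    also have "\<dots> \<le> measure_pmf.expectation (ws_run n \<Phi> 0) (Gpot M D c) + real \<omega> * L"
      unfolding L_def by (rule run_exp[OF ctx])
    also have "\<dots> \<le> real (card (Dmist n k M)) / 2 ^ n + real \<omega> * L"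
      using start_exp[OF ctx] by simp
    also have "\<dots> \<le> exp (- 2 * real n / real k ^ 2) + (exp t + 1) * (real k * 3 powr (2 - 8 * x))"
    proof (intro add_mono)
      show "real (card (Dmist n k M)) / 2 ^ n \<le> exp (- 2 * real n / real k ^ 2)"
        using Q1 by (simp add: divide_le_eq mult.commute)
      show "real \<omega> * L \<le> (exp t + 1) * (real k * 3 powr (2 - 8 * x))"
        using om Lle L0 by (intro mult_mono) auto
    qed
    also have "\<dots> \<le> exp (- real n / real k ^ 2)"
      unfolding t_def x_def by (rule final_arith[OF k3 nr])
    finally show "suc_prob n \<Phi> (nat \<lceil>exp (real n / real k ^ 2)\<rceil>) \<le> exp (- real n / real k ^ 2)"
      unfolding \<omega>_def t_def .
  qed
qed

end
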